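(* Fix $R>0$. For $\theta_0\in[0,2\pi)$, $\varphi_0\in[0,2\pi)$ and $\tau\geq 0$ define $$\mathbf r_0(\theta_0,\varphi_0)=(-R\cos\theta_0\cos\varphi_0,\;R\cos\theta_0\sin\varphi_0,\;R\sin\theta_0),\qquad \mathbf p_0(\theta_0,\varphi_0)=(\sin\theta_0\cos\varphi_0,\;-\sin\theta_0\sin\varphi_0,\;\cos\theta_0),$$ and the ray map $F(\theta_0,\varphi_0,\tau)=\mathbf r_0(\theta_0,\varphi_0)+\tau\,\mathbf p_0(\theta_0,\varphi_0)\in\mathbb R^3$. Then the caustic of this family of rays, i.e. the set $$\{F(\theta_0,\varphi_0,\tau)\;:\;\det DF(\theta_0,\varphi_0,\tau)=0\}$$ (where $DF$ is the Jacobian matrix of $(x,y,z)=F$ with respect to $(\theta_0,\varphi_0,\tau)$), is the union of (a) the sphere $\{\mathbf x\in\mathbb R^3:|\mathbf x|=R\}$ (the surface of the ball, envelope of the diffracted rays) and (b) the two semiaxes $\mathcal A_+=\{(0,0,z):z\geq R\}$ and $\mathcal A_-=\{(0,0,z):z\leq -R\}$ (the axial caustic).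
   Context: Physical setting: a spherical obstacle (ball of radius $R$ centred at the origin of Cartesian coordinates $(x,y,z)$) is illuminated by a beam of rays parallel to the $z$-axis coming from $z=-\infty$; rays grazing the sphere travel along meridians and leave it tangentially. The point $\mathbf r_0$ is the point on the sphere where the ray leaves the surface ($\theta_0$ is the angle measured along the meridian from the point of incidence, $\varphi_0$ the azimuthal angle), $\mathbf p_0$ is the unit tangent vector there, and $\tau\ge 0$ is the arclength parameter along the emerging straight ray. The extended symmetry axis of the ball is the $z$-axis, $\mathcal A_-$ is its part on the illuminated side and $\mathcal A_+$ its part in the shadow. *)

theory Defs
  imports "HOL-Analysis.Analysis"
begin

definition r0 :: "real \<Rightarrow> real \<Rightarrow> real \<Rightarrow> real^3" where
  "r0 R th ph = vector [- R * cos th * cos ph, R * cos th * sin ph, R * sin th]"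

definition p0 :: "real \<Rightarrow> real \<Rightarrow> real^3" where
  "p0 th ph = vector [sin th * cos ph, - sin th * sin ph, cos th]"

text \<open>Ray map F, with argument v = (theta0, phi0, tau) = (v$1, v$2, v$3).\<close>
definition rayF :: "real \<Rightarrow> real^3 \<Rightarrow> real^3" where
  "rayF R v = r0 R (v$1) (v$2) + (v$3) *\<^sub>R p0 (v$1) (v$2)"

definition caustic :: "real \<Rightarrow> (real^3) set" where
  "caustic R = {rayF R v | v. v$1 \<in> {0..<2*pi} \<and> v$2 \<in> {0..<2*pi} \<and> v$3 \<ge> 0
                  \<and> det (jacobian (rayF R) (at v)) = 0}"

end

theory Submission imports Defs begin

lemma vec3_eq: "(vector[a,b,c] :: real^3) = a *\<^sub>R axis 1 1 + b *\<^sub>R axis 2 1 + c *\<^sub>R axis 3 1"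
  by (simp add: vec_eq_iff forall_3 axis_def)

lemma nth_der: "((\<lambda>v::real^3. v$i) has_derivative (\<lambda>h. h$i)) (at v)"
  by (rule bounded_linear_imp_has_derivative[OF bounded_linear_vec_nth])

definition JM :: "real \<Rightarrow> real^3 \<Rightarrow> real^3^3" where
 "JM R v = (let t = v$1; p = v$2; s = v$3 in
   vector [vector [cos p * (s * cos t + R * sin t), - sin p * (s * sin t - R * cos t), cos p * sin t],
           vector [- sin p * (s * cos t + R * sin t), - cos p * (s * sin t - R * cos t), - sin p * sin t],
           vector [R * cos t - s * sin t, 0, cos t]])"

lemma rayF_der: "(rayF R has_derivative (\<lambda>h. JM R v *v h)) (at v)"
proof -
  have e: "rayF R = (\<lambda>v. (- R * cos (v$1) * cos (v$2) + v$3 * (sin (v$1) * cos (v$2))) *\<^sub>R axis 1 1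
     + (R * cos (v$1) * sin (v$2) + v$3 * (- sin (v$1) * sin (v$2))) *\<^sub>R axis 2 1
     + (R * sin (v$1) + v$3 * cos (v$1)) *\<^sub>R axis 3 1)"
    by (rule ext) (simp add: rayF_def r0_def p0_def vec_eq_iff forall_3 axis_def)
  show ?thesis unfolding e
    apply (rule derivative_eq_intros nth_der | simp)+
    apply (rule ext)
    apply (simp add: JM_def Let_def vec_eq_iff forall_3 matrix_vector_mult_def sum_3 axis_def algebra_simps)
    done
qed

lemma jac: "jacobian (rayF R) (at v) = JM R v"
  unfolding jacobian_def frechet_derivative_at[OF rayF_der, symmetric] by (simp add: matrix_of_matrix_vector_mul)

lemma detJM: "det (JM R v) = - (v$3 * sin (v$1) - R * cos (v$1)) * v$3"
proof -
  have c: "cos (v$2)^2 = 1 - sin (v$2)^2" "cos (v$1)^2 = 1 - sin (v$1)^2" by (simp_all add: cos_squared_eq)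
  show ?thesis
  unfolding det_3 JM_def Let_def vector_3
  using sin_cos_squared_add[of "v$1"] sin_cos_squared_add[of "v$2"] by algebra
qed

lemma rayF_eq: "rayF R v = vector [cos (v$2) * (v$3 * sin (v$1) - R * cos (v$1)),
      - sin (v$2) * (v$3 * sin (v$1) - R * cos (v$1)), R * sin (v$1) + v$3 * cos (v$1)]"
  by (simp add: rayF_def r0_def p0_def vec_eq_iff forall_3 algebra_simps)

lemma norm3: "norm (x::real^3) = sqrt (x$1^2 + x$2^2 + x$3^2)"
  by (simp add: norm_vec_def L2_set_def sum_3)

lemma causticI: "v$1 \<in> {0..<2*pi} \<Longrightarrow> v$2 \<in> {0..<2*pi} \<Longrightarrow> v$3 \<ge> 0 \<Longrightarrow>
   (v$3 * sin (v$1) - R * cos (v$1)) * v$3 = 0 \<Longrightarrow> x = rayF R v \<Longrightarrow> x \<in> caustic R"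
  unfolding caustic_def jac detJM by auto

theorem proposition6:
  fixes R :: real
  assumes "R > 0"
  shows "caustic R = sphere 0 R
           \<union> {vector [0, 0, z] | z. z \<ge> R}
           \<union> {vector [0, 0, z] | z. z \<le> - R}"
proof (rule set_eqI, rule iffI)
  fix x assume "x \<in> caustic R"
  then obtain v where x: "x = rayF R v" and v3: "v$3 \<ge> 0"
     and d: "(v$3 * sin (v$1) - R * cos (v$1)) * v$3 = 0"
    unfolding caustic_def jac detJM by auto
  define t where "t = v$1"
  define p where "p = v$2"
  define s where "s = v$3"
  have xe: "x = vector [cos p * (s * sin t - R * cos t), - sin p * (s * sin t - R * cos t), R * sin t + s * cos t]"
    using x rayF_eq t_def p_def s_def by simp
  from d have "s = 0 \<or> s * sin t - R * cos t = 0" unfolding s_def t_def by auto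
  then show "x \<in> sphere 0 R \<union> {vector [0, 0, z] | z. z \<ge> R} \<union> {vector [0, 0, z] | z. z \<le> - R}"
  proof
    assume "s = 0"
    then have "x$1^2 + x$2^2 + x$3^2 = R^2"
    proof -
      have "x$1^2 + x$2^2 + x$3^2 = (cos p * (R * cos t))^2 + (sin p * (R * cos t))^2 + (R * sin t)^2"
        using xe \<open>s = 0\<close> by simp
      also have "\<dots> = R^2" using sin_cos_squared_add[of t] sin_cos_squared_add[of p] by algebra
      finally show ?thesis .
    qed
    then have "norm x = R" using norm3[of x] assms by simp
    then show ?thesis by simp
  next
    assume r: "s * sin t - R * cos t = 0"
    define z where "z = R * sin t + s * cos t"
    have xz: "x = vector [0, 0, z]" using xe r z_def by simp
    have "z^2 = R^2 + s^2"
    proof -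
      have "z^2 = z^2 + (s * sin t - R * cos t)^2" using r by simp
      also have "\<dots> = R^2 + s^2" unfolding z_def using sin_cos_squared_add[of t] by algebra
      finally show ?thesis .
    qed
    then have "R^2 \<le> z^2" by simp
    then have "R \<le> \<bar>z\<bar>" using assms by (metis abs_le_square_iff abs_of_pos)
    then show ?thesis using xz by (cases "z \<ge> 0") auto
  qed
next
  fix x :: "real^3" assume "x \<in> sphere 0 R \<union> {vector [0, 0, z] | z. z \<ge> R} \<union> {vector [0, 0, z] | z. z \<le> - R}"
  then consider "norm x = R" | z where "x = vector [0,0,z]" "R \<le> \<bar>z\<bar>" by fastforce
  then show "x \<in> caustic R"
  proof cases
    case 1
    define a where "a = x$1"
    define b where "b = x$2"
    define c where "c = x$3"
    define q where "q = sqrt (a^2 + b^2)"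
    have sq: "a^2 + b^2 + c^2 = R^2" using 1 norm3[of x] a_def b_def c_def
      by (metis add_nonneg_nonneg real_sqrt_pow2 zero_le_power2)
    have q2: "q^2 = a^2 + b^2" unfolding q_def by simp
    have q0: "q \<ge> 0" unfolding q_def by simp
    have "(q/R)^2 + (c/R)^2 = 1" using sq q2 assms by (simp add: power_divide field_simps)
    then obtain th where th: "0 \<le> th" "th < 2*pi" "q/R = cos th" "c/R = sin th"
      by (rule sincos_total_2pi)
    obtain ph where ph: "0 \<le> ph" "ph < 2*pi" "a = - q * cos ph" "b = q * sin ph"
    proof (cases "q = 0")
      case True
      then have "a = 0" "b = 0" using q2 by (auto simp: sum_power2_eq_zero_iff)
      then show ?thesis using that[of 0] True by simp
    next
      case False
      then have "q^2 \<noteq> 0" by simp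
      then have "(-a/q)^2 + (b/q)^2 = 1" unfolding power_divide power2_minus
        by (simp add: add_divide_distrib[symmetric] q2)
      then obtain ph where "0 \<le> ph" "ph < 2*pi" "-a/q = cos ph" "b/q = sin ph"
        by (rule sincos_total_2pi)
      then show ?thesis using that[of ph] False by (simp add: field_simps)
    qed
    define v :: "real^3" where "v = vector [th, ph, 0]"
    show ?thesis
    proof (rule causticI[of v])
      show "x = rayF R v" unfolding rayF_eq v_def vector_3
        using th ph assms
        by (simp add: vec_eq_iff forall_3 a_def[symmetric] b_def[symmetric] c_def[symmetric]
                 field_simps flip: th(3) th(4))
    qed (use th ph in \<open>auto simp: v_def\<close>)
  next
    case 2
    define q where "q = sqrt (z^2 - R^2)"
    have zR: "R^2 \<le> z^2" using 2(2) assms by (metis abs_le_square_iff abs_of_pos)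
    have q2: "q^2 = z^2 - R^2" unfolding q_def using zR by simp
    have z0: "z \<noteq> 0" using 2 assms by auto
    have "(q/z)^2 + (R/z)^2 = 1" using q2 z0 by (simp add: power_divide field_simps)
    then obtain th where th: "0 \<le> th" "th < 2*pi" "q/z = cos th" "R/z = sin th"
      by (rule sincos_total_2pi)
    define v :: "real^3" where "v = vector [th, 0, q]"
    have r: "q * sin th - R * cos th = 0" using z0 by (simp flip: th(3) th(4) add: field_simps)
    show ?thesis
    proof (rule causticI[of v])
      have "R * sin th + q * cos th = z" using z0 q2
        by (simp flip: th(3) th(4) add: field_simps power2_eq_square)
      then show "x = rayF R v" unfolding rayF_eq v_def vector_3 using 2 r by simp
    qed (use th r zR in \<open>auto simp: v_def q_def\<close>)
  qed
qed
end
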